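(* Let $\Omega\subseteq\mathbb{R}$ and fix $t\in\mathbb{N}$. Let $f^t,f^{t+1}:\Omega\to\mathbb{R}$ be continuously differentiable and strictly convex, and suppose that for all $z\in\Omega$: (i) $(f^t)'$ is differentiable and concave (at $z$), and (ii) $(f^{t+1})'(z)\le(f^t)'(z)$. Then for any $x,m\in\Omega$ with $x\le m$ and any $y,n\in\Omega$ such that $(f^{t+1})'(y)-(f^t)'(x)=(f^{t+1})'(n)-(f^t)'(m)=\xi$ for a fixed scalar $\xi$, we have $D^{t,t+1}(x,y)\le D^{t,t+1}(m,n)$.
   Context: The skewed Bregman divergence is $D^{t,t+1}(u,v)=f^t(u)-f^{t+1}(v)-(u-v)\,(f^{t+1})'(v)$. *)

theory Defs
  imports "HOL-Analysis.Analysis"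
begin

definition strictly_convex_on :: "real set \<Rightarrow> (real \<Rightarrow> real) \<Rightarrow> bool" where
  "strictly_convex_on S f \<longleftrightarrow> convex S \<and>
     (\<forall>x\<in>S. \<forall>y\<in>S. x \<noteq> y \<longrightarrow> (\<forall>u::real. 0 < u \<and> u < 1 \<longrightarrow>
        f (u * x + (1 - u) * y) < u * f x + (1 - u) * f y))"

definition skewed_bregman :: "(nat \<Rightarrow> real \<Rightarrow> real) \<Rightarrow> nat \<Rightarrow> real \<Rightarrow> real \<Rightarrow> real" where
  "skewed_bregman F t u v = F t u - F (Suc t) v - (u - v) * deriv (F (Suc t)) v"

end

theory Submission
  imports Defs
begin

lemma sconv_imp_conv:
  assumes "strictly_convex_on S f" shows "convex_on S f"
  unfolding convex_on_alt
proof (intro conjI ballI allI impI)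
  show "convex S" using assms by (simp add: strictly_convex_on_def)
next
  fix x y and \<mu> :: real assume xy: "x \<in> S" "y \<in> S" and mu: "0 \<le> \<mu> \<and> \<mu> \<le> 1"
  show "f (\<mu> *\<^sub>R x + (1 - \<mu>) *\<^sub>R y) \<le> \<mu> * f x + (1 - \<mu>) * f y"
  proof (cases "x = y \<or> \<mu> = 0 \<or> \<mu> = 1")
    case True
    then show ?thesis by (auto simp: algebra_simps)
  next
    case False
    then have "f (\<mu> * x + (1 - \<mu>) * y) < \<mu> * f x + (1 - \<mu>) * f y"
      using assms xy mu unfolding strictly_convex_on_def by auto
    then show ?thesis by simp
  qed
qed

lemma tangent:
  fixes f :: "real \<Rightarrow> real"
  assumes conv: "convex_on A f" and c: "c \<in> A" and x: "x \<in> A"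
    and d: "(f has_real_derivative f') (at c)"
  shows "f x - f c \<ge> f' * (x - c)"
proof (cases x c rule: linorder_cases)
  assume xc: "x > c"
  have lim: "((\<lambda>y. (f y - f c) / (y - c)) \<longlongrightarrow> f') (at_right c)"
    using d unfolding has_field_derivative_iff by (blast intro: tendsto_mono at_le)
  moreover have "eventually (\<lambda>y. (f y - f c) / (y - c) \<le> (f x - f c) / (x - c)) (at_right c)"
    using eventually_at_right_real[OF xc]
  proof eventually_elim
    fix y assume y: "y \<in> {c<..<x}"
    have "(f c - f y) / (c - y) \<le> (f c - f x) / (c - x)"
      using convex_on_slope_le(1)[OF conv c x, of y] y by auto
    then show "(f y - f c) / (y - c) \<le> (f x - f c) / (x - c)"
      by (smt (verit) minus_divide_divide)
  qed
  ultimately have "f' \<le> (f x - f c) / (x - c)"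
    by (intro tendsto_upperbound[OF lim]) (auto simp: trivial_limit_at_right_real)
  thus ?thesis using xc by (simp add: field_simps)
next
  assume xc: "x < c"
  have lim: "((\<lambda>y. (f y - f c) / (y - c)) \<longlongrightarrow> f') (at_left c)"
    using d unfolding has_field_derivative_iff by (blast intro: tendsto_mono at_le)
  moreover have "eventually (\<lambda>y. (f y - f c) / (y - c) \<ge> (f x - f c) / (x - c)) (at_left c)"
    using eventually_at_left_real[OF xc]
  proof eventually_elim
    fix y assume y: "y \<in> {x<..<c}"
    show "(f y - f c) / (y - c) \<ge> (f x - f c) / (x - c)"
      using convex_on_slope_le(2)[OF conv x c, of y] y by auto
  qed
  ultimately have "f' \<ge> (f x - f c) / (x - c)"
    by (intro tendsto_lowerbound[OF lim]) (auto simp: trivial_limit_at_left_real)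
  thus ?thesis using xc by (simp add: field_simps)
qed simp

lemma step_alg:
  fixes gs gs' Gs Gs' Gz xi s s' z :: real
  assumes d: "s < s'" and cv: "gs' - gs \<ge> Gs*(s'-s)" and mo: "Gs \<le> Gs'" and hz: "Gs + xi \<le> Gz"
    and ca: "s' \<le> z \<Longrightarrow> (Gz - Gs')*(s'-s) \<le> (z-s')*(Gs'-Gs)"
    and cb: "z \<le> s \<Longrightarrow> (Gs - Gz)*(s'-s) \<ge> (s-z)*(Gs'-Gs)"
    and cc: "s \<le> z \<Longrightarrow> z \<le> s' \<Longrightarrow> Gz \<le> Gs'"
  shows "(gs' + (z-s')*(Gs'+xi)) - (gs + (z-s)*(Gs+xi)) \<ge> -2*(s'-s)*(Gs'-Gs)"
proof -
  have 1: "xi*(s'-s) \<le> (Gz-Gs)*(s'-s)" using hz d by (intro mult_right_mono) auto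
  have base: "(gs' + (z-s')*(Gs'+xi)) - (gs + (z-s)*(Gs+xi)) \<ge> (z-s')*(Gs'-Gs) + (s'-s)*(Gs-Gz)"
    using 1 cv by (simp add: algebra_simps)
  consider "s' \<le> z" | "z \<le> s" | "s \<le> z \<and> z \<le> s'" by linarith
  then show ?thesis
  proof cases
    case 1
    have "(z-s')*(Gs'-Gs) + (s'-s)*(Gs-Gz) \<ge> -(s'-s)*(Gs'-Gs)"
      using ca[OF 1] by (simp add: algebra_simps)
    moreover have "(s'-s)*(Gs'-Gs) \<ge> 0" using d mo by simp
    ultimately show ?thesis using base by linarith
  next
    case 2
    have "(z-s')*(Gs'-Gs) + (s'-s)*(Gs-Gz) \<ge> -(s'-s)*(Gs'-Gs)"
      using cb[OF 2] by (simp add: algebra_simps)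
    moreover have "(s'-s)*(Gs'-Gs) \<ge> 0" using d mo by simp
    ultimately show ?thesis using base by linarith
  next
    case 3
    have a: "(s'-s)*(Gs-Gz) \<ge> (s'-s)*(Gs-Gs')" using cc 3 d by (intro mult_left_mono) auto
    have b: "(z-s')*(Gs'-Gs) \<ge> (s-s')*(Gs'-Gs)" using 3 mo by (intro mult_right_mono) auto
    show ?thesis using base a b by (simp add: algebra_simps)
  qed
qed

lemma conc3:
  fixes G :: "real \<Rightarrow> real"
  assumes cG: "concave_on A G" and a: "a \<in> A" and c: "c \<in> A" and ab: "a \<le> b" and bc: "b \<le> c"
  shows "(c-a)*G b \<ge> (c-b)*G a + (b-a)*G c"
proof (cases "a = c")
  case True
  then have "b = a" using ab bc by simp
  then show ?thesis using True by simp
next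
  case False
  then have ac: "a < c" using ab bc by simp
  define u where "u = (b-a)/(c-a)"
  have u0: "0 \<le> u" "u \<le> 1" using ab bc ac by (auto simp: u_def field_simps)
  have uu: "u*(c-a) = b-a" using ac by (simp add: u_def)
  have bu: "(1-u) * a + u * c = b" using uu by (simp add: algebra_simps)
  have "- G ((1 - u) *\<^sub>R a + u *\<^sub>R c) \<le> (1-u) * (- G a) + u * (- G c)"
    using convex_onD[OF cG[unfolded concave_on_def] u0 a c] .
  then have "G b \<ge> (1-u)*G a + u*G c" using bu by simp
  then have "(c-a)*G b \<ge> (c-a)*((1-u)*G a + u*G c)" using ac by (intro mult_left_mono) auto
  also have "(c-a)*((1-u)*G a + u*G c) = (c-a)*G a - (u*(c-a))*G a + (u*(c-a))*G c"
    by (simp add: algebra_simps)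
  also have "\<dots> = (c-b)*G a + (b-a)*G c" unfolding uu by (simp add: algebra_simps)
  finally show ?thesis .
qed

theorem theorem5:
  fixes \<Omega> :: "real set" and F :: "nat \<Rightarrow> real \<Rightarrow> real" and t :: nat
    and x m y n \<xi> :: real
  assumes diff_t: "\<forall>z\<in>\<Omega>. F t differentiable (at z)"
    and diff_t1: "\<forall>z\<in>\<Omega>. F (Suc t) differentiable (at z)"
    and cont_t: "continuous_on \<Omega> (deriv (F t))"
    and cont_t1: "continuous_on \<Omega> (deriv (F (Suc t)))"
    and sconv_t: "strictly_convex_on \<Omega> (F t)"
    and sconv_t1: "strictly_convex_on \<Omega> (F (Suc t))"
    and deriv_diff: "\<forall>z\<in>\<Omega>. deriv (F t) differentiable (at z)"
    and deriv_concave: "concave_on \<Omega> (deriv (F t))"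
    and deriv_le: "\<forall>z\<in>\<Omega>. deriv (F (Suc t)) z \<le> deriv (F t) z"
    and x: "x \<in> \<Omega>" and m: "m \<in> \<Omega>" and xm: "x \<le> m"
    and y: "y \<in> \<Omega>" and n: "n \<in> \<Omega>"
    and xi1: "deriv (F (Suc t)) y - deriv (F t) x = \<xi>"
    and xi2: "deriv (F (Suc t)) n - deriv (F t) m = \<xi>"
  shows "skewed_bregman F t x y \<le> skewed_bregman F t m n"
proof -
  define g where "g = F t"
  define h where "h = F (Suc t)"
  define G where "G = deriv g"
  define H where "H = deriv h"
  have cg: "convex_on \<Omega> g" using sconv_imp_conv[OF sconv_t] by (simp add: g_def)
  have ch: "convex_on \<Omega> h" using sconv_imp_conv[OF sconv_t1] by (simp add: h_def)
  have ival: "is_interval \<Omega>" using cg by (simp add: is_interval_convex_1 convex_on_def)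
  have Tg: "g b - g a \<ge> G a * (b - a)" if "a \<in> \<Omega>" "b \<in> \<Omega>" for a b
    using tangent[OF cg that] diff_t that unfolding G_def g_def
    by (simp add: DERIV_deriv_iff_real_differentiable)
  have Th: "h b - h a \<ge> H a * (b - a)" if "a \<in> \<Omega>" "b \<in> \<Omega>" for a b
    using tangent[OF ch that] diff_t1 that unfolding H_def h_def
    by (simp add: DERIV_deriv_iff_real_differentiable)
  have monoG: "G a \<le> G b" if "a \<in> \<Omega>" "b \<in> \<Omega>" "a < b" for a b
  proof -
    have "g b - g a \<ge> G a * (b - a)" "g a - g b \<ge> G b * (a - b)" using Tg that by auto
    then have "(G b - G a) * (b - a) \<ge> 0" by (simp add: algebra_simps)
    then show ?thesis using that by (simp add: zero_le_mult_iff)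
  qed
  have cG: "concave_on \<Omega> G" using deriv_concave by (simp add: G_def g_def)
  have HleG: "H z \<le> G z" if "z \<in> \<Omega>" for z using deriv_le that by (simp add: H_def G_def h_def g_def)
  have Hy: "H y = G x + \<xi>" and Hn: "H n = G m + \<xi>" using xi1 xi2 by (auto simp: H_def G_def h_def g_def)
  define Psi where "Psi s z = g s + (z - s) * (G s + \<xi>) - h z" for s z
  have maxP: "Psi s z \<le> Psi s z'" if "z \<in> \<Omega>" "z' \<in> \<Omega>" "H z' = G s + \<xi>" for s z z'
    using Th[OF that(2,1)] that(3) unfolding Psi_def by (simp add: algebra_simps)
  have inO: "s \<in> \<Omega>" if "x \<le> s" "s \<le> m" for s
    using mem_is_interval_1_I[OF ival x m that] .
  have exY: "\<exists>z. z \<in> \<Omega> \<and> H z = G s + \<xi>" if "x \<le> s" "s \<le> m" for s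
  proof -
    have l: "H y \<le> G s + \<xi>" "G s + \<xi> \<le> H n"
      using Hy Hn monoG[OF x inO[OF that]] monoG[OF inO[OF that] m] that
      by (cases "x = s"; cases "s = m"; auto)+
    have cH: "continuous_on \<Omega> H" using cont_t1 by (simp add: H_def h_def)
    show ?thesis
    proof (cases "y \<le> n")
      case True
      have sub: "{y..n} \<subseteq> \<Omega>" using mem_is_interval_1_I[OF ival y n] by auto
      obtain z where "y \<le> z" "z \<le> n" "H z = G s + \<xi>"
        using IVT'[of H y "G s + \<xi>" n] l True continuous_on_subset[OF cH sub] by auto
      then show ?thesis using sub by auto
    next
      case False
      have sub: "{n..y} \<subseteq> \<Omega>" using mem_is_interval_1_I[OF ival n y] by auto
      obtain z where "n \<le> z" "z \<le> y" "H z = G s + \<xi>"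
        using IVT2'[of H y "G s + \<xi>" n] l False continuous_on_subset[OF cH sub] by auto
      then show ?thesis using sub by auto
    qed
  qed
  define Y where "Y s = (SOME z. z \<in> \<Omega> \<and> H z = G s + \<xi>)" for s
  have Y: "Y s \<in> \<Omega>" "H (Y s) = G s + \<xi>" if "x \<le> s" "s \<le> m" for s
    using someI_ex[OF exY[OF that]] unfolding Y_def by auto
  define Phi where "Phi s = Psi s (Y s)" for s
  have step: "Phi s' - Phi s \<ge> -2*(s'-s)*(G s' - G s)"
    if s: "x \<le> s" and ss: "s < s'" and s': "s' \<le> m" for s s'
  proof -
    have sO: "s \<in> \<Omega>" and s'O: "s' \<in> \<Omega>" using inO s ss s' by auto
    define z where "z = Y s"
    have zO: "z \<in> \<Omega>" and Hz: "H z = G s + \<xi>" using Y[of s] s ss s' by (auto simp: z_def)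
    have "Phi s' \<ge> Psi s' z" unfolding Phi_def
      by (rule maxP[OF zO]) (use Y[of s'] s ss s' in auto)
    moreover have "Psi s' z - Psi s z \<ge> -2*(s'-s)*(G s' - G s)"
    proof -
      have "(g s' + (z-s')*(G s'+\<xi>)) - (g s + (z-s)*(G s+\<xi>)) \<ge> -2*(s'-s)*(G s'-G s)"
      proof (rule step_alg[OF ss])
        show "G s * (s' - s) \<le> g s' - g s" using Tg[OF sO s'O] .
        show "G s \<le> G s'" using monoG[OF sO s'O ss] .
        show "G s + \<xi> \<le> G z" using HleG[OF zO] Hz by simp
        show "(G z - G s') * (s' - s) \<le> (z - s') * (G s' - G s)" if "s' \<le> z"
          using conc3[OF cG sO zO, of s'] ss that by (simp add: algebra_simps)
        show "(s - z) * (G s' - G s) \<le> (G s - G z) * (s' - s)" if "z \<le> s"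
          using conc3[OF cG zO s'O, of s] ss that by (simp add: algebra_simps)
        show "G z \<le> G s'" if "s \<le> z" "z \<le> s'"
          using monoG[OF zO s'O] that by (cases "z = s'") auto
      qed
      then show ?thesis unfolding Psi_def by simp
    qed
    ultimately show ?thesis unfolding Phi_def z_def by linarith
  qed
  have bound: "Phi m - Phi x \<ge> -2*((m-x)/real N)*(G m - G x)" if N: "N > 0" for N :: nat
  proof -
    define q where "q = (m - x) / real N"
    define S where "S k = x + real k * q" for k :: nat
    have Sr: "x \<le> S k \<and> S k \<le> m" if "k \<le> N" for k
    proof -
      have "real k * (m - x) \<le> real N * (m - x)" using that xm by (intro mult_right_mono) auto
      moreover have "0 \<le> real k * (m - x)" using xm by simp
      ultimately show ?thesis using N xm by (auto simp: S_def q_def field_simps)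
    qed
    have "k \<le> N \<Longrightarrow> Phi (S k) - Phi x \<ge> -2*((m-x)/real N)*(G (S k) - G x)" for k
    proof (induction k)
      case 0
      then show ?case by (simp add: S_def)
    next
      case (Suc k)
      have d: "S (Suc k) - S k = (m-x)/real N" by (simp add: S_def q_def[symmetric] algebra_simps)
      have IH: "Phi (S k) - Phi x \<ge> -2*((m-x)/real N)*(G (S k) - G x)" using Suc by simp
      have "Phi (S (Suc k)) - Phi (S k) \<ge> -2*((m-x)/real N)*(G (S (Suc k)) - G (S k))"
      proof (cases "x = m")
        case True
        then have "S (Suc k) = S k" using d by simp
        then show ?thesis by simp
      next
        case False
        then have "(m-x)/real N > 0" using xm N by simp
        then have "S k < S (Suc k)" using d by linarith
        then show ?thesis using step[of "S k" "S (Suc k)"] Sr[of k] Sr[of "Suc k"] Suc.prems d by auto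
      qed
      moreover have "-2*((m-x)/real N)*(G (S (Suc k)) - G x) = -2*((m-x)/real N)*(G (S (Suc k)) - G (S k)) + -2*((m-x)/real N)*(G (S k) - G x)"
        by (simp add: q_def[symmetric] algebra_simps)
      ultimately show ?case using IH by linarith
    qed
    from this[of N] have "Phi (S N) - Phi x \<ge> -2*((m-x)/real N)*(G (S N) - G x)" by simp
    moreover have "S N = m" using N by (simp add: S_def q_def)
    ultimately show ?thesis by simp
  qed
  have PhiM: "Phi x \<le> Phi m"
  proof (rule ccontr)
    assume "\<not> ?thesis"
    then have dpos: "Phi x - Phi m > 0" by simp
    define C where "C = 2*(m-x)*(G m - G x)"
    have C0: "C \<ge> 0" using xm monoG[OF x m] by (cases "x = m") (auto simp: C_def)
    obtain N :: nat where N: "C / (Phi x - Phi m) < real N" using reals_Archimedean2 by blast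
    have "C / (Phi x - Phi m) \<ge> 0" using C0 dpos by simp
    then have Npos: "N > 0" using N by (cases N) auto
    have "C < real N * (Phi x - Phi m)" using N dpos by (simp add: divide_less_eq mult.commute)
    then have "C / real N < Phi x - Phi m" using Npos by (simp add: divide_less_eq mult.commute)
    moreover have "Phi m - Phi x \<ge> - (C / real N)" 
    proof -
      have "-2*((m-x)/real N)*(G m - G x) = - (C / real N)" using Npos by (simp add: C_def field_simps)
      then show ?thesis using bound[OF Npos] by linarith
    qed
    ultimately show False by linarith
  qed
  have "skewed_bregman F t x y = Psi x y"
    proof -
    have e: "deriv (F (Suc t)) y = deriv (F t) x + \<xi>" using xi1 by simp
    show ?thesis unfolding skewed_bregman_def Psi_def g_def h_def G_def e by (simp add: algebra_simps)
  qed
  also have "\<dots> \<le> Phi x" unfolding Phi_def by (rule maxP[OF y]) (use Y[of x] xm in auto)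
  also have "\<dots> \<le> Phi m" by (rule PhiM)
  also have "\<dots> \<le> Psi m n" unfolding Phi_def by (rule maxP[OF _ n Hn]) (use Y[of m] xm in auto)
  also have "\<dots> = skewed_bregman F t m n"
    proof -
    have e: "deriv (F (Suc t)) n = deriv (F t) m + \<xi>" using xi2 by simp
    show ?thesis unfolding skewed_bregman_def Psi_def g_def h_def G_def e by (simp add: algebra_simps)
  qed
  finally show ?thesis .
qed

end
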